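(* Let $m\in\mathbb{N}$ and $w>0$, and let $(n_k)_{k=1}^\infty$ be the increasing sequence of all $n\in\mathbb{N}$ with $(\varphi\circ\eta_w)(n)=m$. Then $(n_k)_{k=1}^\infty$ is a completely deterministic sequence.
   Context: $\mathbb{N}=\{1,2,\ldots\}$. Define $L_w(1):=1$ and $L_w(n):=\lceil w(L_w(1)+\cdots+L_w(n-1))\rceil$ for $n\ge2$. Let $\beta_n:=\max\{k: k(k+1)/2\le n\}$, $\varphi(n):=n-\beta_n(\beta_n+1)/2$, and $\eta_w(n):=\max\{k:\sum_{j=1}^k L_w(j)\le n\}$. The indicator sequence of an increasing sequence $(n_k)\subset\mathbb{N}$ is $(\omega_n)_{n\ge1}\in\{0,1\}^{\mathbb{N}}$ with $\omega_n=1$ iff $n=n_k$ for some $k$. A binary sequence $(\omega_n)$ is completely deterministic if for every $\varepsilon>0$ there is $K\in\mathbb{N}$ such that, after removing from $(\omega_n)$ a set of positions of density less than $\varepsilon$, what remains can be covered by $K$-blocks (words of length $K$) taken from a collection $\mathcal{C}$ with $|\mathcal{C}|<2^{\varepsilon K}$. An increasing sequence of positive integers is completely deterministic if its indicator sequence is. *)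

theory Defs
  imports Complex_Main "HOL-Library.Extended_Real"
begin

text \<open>L_w(n) for n >= 1 (the value at 0 is an irrelevant 0):
  L_w(1) = 1, L_w(n) = ceiling (w * (L_w(1) + ... + L_w(n-1))).\<close>
fun L_w :: "real \<Rightarrow> nat \<Rightarrow> nat" where
  "L_w w 0 = 0"
| "L_w w (Suc n) =
     (if n = 0 then 1 else nat \<lceil>w * (\<Sum>j\<in>{1..n}. real (L_w w j))\<rceil>)"

definition beta :: "nat \<Rightarrow> nat" where
  "beta n = Max {k::nat. k * (k + 1) div 2 \<le> n}"

definition phi :: "nat \<Rightarrow> nat" where
  "phi n = n - beta n * (beta n + 1) div 2"

definition eta_w :: "real \<Rightarrow> nat \<Rightarrow> nat" where
  "eta_w w n = Max {k::nat. (\<Sum>j\<in>{1..k}. L_w w j) \<le> n}"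

definition upper_density :: "nat set \<Rightarrow> ereal" where
  "upper_density S = limsup (\<lambda>n. ereal (real (card (S \<inter> {1..n})) / real n))"

definition completely_deterministic :: "(nat \<Rightarrow> bool) \<Rightarrow> bool" where
  "completely_deterministic \<omega> \<longleftrightarrow>
     (\<forall>\<epsilon>::real. \<epsilon> > 0 \<longrightarrow>
        (\<exists>K::nat. K \<ge> 1 \<and>
          (\<exists>S C A.
             S \<subseteq> {1..} \<and> upper_density S < ereal \<epsilon> \<and>
             finite C \<and> (\<forall>c\<in>C. length c = K) \<and>
             real (card C) < 2 powr (\<epsilon> * real K) \<and>
             A \<subseteq> {1..} \<and>
             (\<forall>a\<in>A. \<forall>b\<in>A. a \<noteq> b \<longrightarrow> {a..<a+K} \<inter> {b..<b+K} = {}) \<and>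
             {1..} - S \<subseteq> (\<Union>a\<in>A. {a..<a+K}) \<and>
             (\<forall>a\<in>A. map \<omega> [a..<a+K] \<in> C))))"

definition completely_deterministic_seq :: "(nat \<Rightarrow> nat) \<Rightarrow> bool" where
  "completely_deterministic_seq nk \<longleftrightarrow> completely_deterministic (\<lambda>n. n \<in> range nk)"

end

theory Submission
  imports Defs
begin

definition Sw :: "real \<Rightarrow> nat \<Rightarrow> nat" where
  "Sw w k = (\<Sum>j\<in>{1..k}. L_w w j)"

lemma Sw_Suc: "Sw w (Suc k) = Sw w k + L_w w (Suc k)"
  unfolding Sw_def by (simp add: sum.cl_ivl_Suc)

lemma L_Suc: "k \<ge> 1 \<Longrightarrow> L_w w (Suc k) = nat \<lceil>w * real (Sw w k)\<rceil>"
  unfolding Sw_def by simp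

lemma L_pos:
  assumes "w > 0" "j \<ge> 1" shows "L_w w j \<ge> 1"
proof -
  obtain n where j: "j = Suc n" using assms(2) by (cases j) auto
  show ?thesis
  proof (cases "n = 0")
    case True thus ?thesis using j by simp
  next
    case False
    have "L_w w 1 \<le> Sw w n" unfolding Sw_def
      using False by (intro member_le_sum) auto
    hence "Sw w n \<ge> 1" by simp
    hence "w * real (Sw w n) > 0" using assms by simp
    hence c: "\<lceil>w * real (Sw w n)\<rceil> \<ge> 1" by linarith
    have e: "L_w w j = nat \<lceil>w * real (Sw w n)\<rceil>"
      by (subst j, rule L_Suc) (use False in simp)
    show ?thesis unfolding e using c by linarith
  qed
qed

lemma Sw_ge: assumes "w > 0" shows "Sw w k \<ge> k"
proof -
  have "(\<Sum>j\<in>{1..k}. (1::nat)) \<le> (\<Sum>j\<in>{1..k}. L_w w j)"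
    by (intro sum_mono) (use L_pos[OF assms] in auto)
  thus ?thesis unfolding Sw_def by simp
qed

lemma L_grow: assumes "w > 0" "k \<ge> 1" shows "real (L_w w (Suc k)) \<ge> w * k"
proof -
  have "w * k \<le> w * real (Sw w k)" using Sw_ge[OF assms(1), of k] assms(1) by simp
  also have "\<dots> \<le> real (nat \<lceil>w * real (Sw w k)\<rceil>)" by linarith
  finally show ?thesis using L_Suc[OF assms(2)] by simp
qed

lemma Sw_mono: assumes "w > 0" "k < k'" shows "Sw w k < Sw w k'"
proof -
  have "strict_mono (Sw w)"
    unfolding strict_mono_Suc_iff using L_pos[OF assms(1)] Sw_Suc
    by (metis One_nat_def Suc_le_eq le_add1 less_add_same_cancel1 Suc_le_mono zero_le)
  thus ?thesis using assms(2) by (simp add: strict_mono_less)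
qed

lemma eta_set: "{k::nat. (\<Sum>j\<in>{1..k}. L_w w j) \<le> n} = {k. Sw w k \<le> n}"
  unfolding Sw_def by simp

lemma eta_fin: assumes "w > 0" shows "finite {k. Sw w k \<le> n}"
proof -
  have "{k. Sw w k \<le> n} \<subseteq> {..n}" using Sw_ge[OF assms] by (auto intro: le_trans)
  thus ?thesis using finite_subset by blast
qed

lemma eta_eq: assumes "w > 0" "Sw w e \<le> n" "n < Sw w (Suc e)" shows "eta_w w n = e"
  unfolding eta_w_def eta_set
proof (rule Max_eqI[OF eta_fin[OF assms(1)]])
  show "e \<in> {k. Sw w k \<le> n}" using assms by simp
  fix y assume "y \<in> {k. Sw w k \<le> n}"
  hence "Sw w y \<le> n" by simp
  show "y \<le> e"
  proof (rule ccontr)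
    assume "\<not> y \<le> e"
    hence "Sw w (Suc e) \<le> Sw w y" using Sw_mono[OF assms(1), of "Suc e" y]
      by (cases "y = Suc e") auto
    thus False using assms \<open>Sw w y \<le> n\<close> by simp
  qed
qed

lemma eta_props: assumes "w > 0"
  shows "Sw w (eta_w w n) \<le> n" "n < Sw w (Suc (eta_w w n))"
proof -
  have ne: "0 \<in> {k. Sw w k \<le> n}" by (simp add: Sw_def)
  have "eta_w w n \<in> {k. Sw w k \<le> n}" unfolding eta_w_def eta_set
    using Max_in[OF eta_fin[OF assms]] ne by blast
  thus "Sw w (eta_w w n) \<le> n" by simp
  show "n < Sw w (Suc (eta_w w n))"
  proof (rule ccontr)
    assume "\<not> ?thesis"
    hence "Suc (eta_w w n) \<in> {k. Sw w k \<le> n}" by simp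
    hence "Suc (eta_w w n) \<le> eta_w w n" unfolding eta_w_def eta_set
      using Max_ge[OF eta_fin[OF assms]] by blast
    thus False by simp
  qed
qed

lemma eta_ge: assumes "w > 0" "Sw w k \<le> n" shows "k \<le> eta_w w n"
  unfolding eta_w_def eta_set using Max_ge[OF eta_fin[OF assms(1)]] assms(2) by blast

lemma density_fin: "upper_density {1..<N} = 0"
proof -
  have lim: "(\<lambda>n. real (card ({1..<N} \<inter> {1..n})) / real n) \<longlonglongrightarrow> 0"
  proof (rule tendsto_sandwich[OF _ _ tendsto_const lim_const_over_n[of "real N"]])
    show "\<forall>\<^sub>F n in sequentially. 0 \<le> real (card ({1..<N} \<inter> {1..n})) / real n" by simp
    have "card ({1..<N} \<inter> {1..n}) \<le> N" for n
      using card_mono[of "{1..<N}" "{1..<N} \<inter> {1..n}"] by auto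
    thus "\<forall>\<^sub>F n in sequentially. real (card ({1..<N} \<inter> {1..n})) / real n \<le> real N / real n"
      by (intro always_eventually allI divide_right_mono) auto
  qed
  have "limsup (\<lambda>n. ereal (real (card ({1..<N} \<inter> {1..n})) / real n)) = ereal 0"
    by (rule lim_imp_Limsup[OF _ tendsto_ereal[OF lim]]) simp
  thus ?thesis unfolding upper_density_def by (simp add: zero_ereal_def)
qed

lemma exists_K: assumes "(\<epsilon>::real) > 0"
  shows "\<exists>K::nat. K \<ge> 1 \<and> 4 * (real K + 1) < 2 powr (\<epsilon> * real K)"
proof -
  define q where "q = 2 powr \<epsilon>"
  have q1: "q > 1" unfolding q_def using assms by simp
  have pw: "2 powr (\<epsilon> * real K) = q ^ K" for K :: nat
    unfolding q_def by (simp add: powr_powr[symmetric] powr_realpow)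
  have "(\<lambda>n. real n / q ^ n) \<longlonglongrightarrow> 0" using lim_n_over_pown[of q] q1 by simp
  hence "(\<lambda>n. real (Suc n) / q ^ Suc n) \<longlonglongrightarrow> 0" by (rule LIMSEQ_Suc)
  hence "(\<lambda>n. (4 * q) * (real (Suc n) / q ^ Suc n)) \<longlonglongrightarrow> (4 * q) * 0"
    by (intro tendsto_mult tendsto_const)
  moreover have "(4 * q) * (real (Suc n) / q ^ Suc n) = 4 * (real n + 1) / q ^ n" for n
    using q1 by (simp add: field_simps)
  ultimately have "(\<lambda>n. 4 * (real n + 1) / q ^ n) \<longlonglongrightarrow> 0" by simp
  hence "\<forall>\<^sub>F K in sequentially. 4 * (real K + 1) / q ^ K < 1"
    by (rule order_tendstoD) simp
  moreover have "\<forall>\<^sub>F K in sequentially. K \<ge> (1::nat)" by (rule eventually_ge_at_top)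
  ultimately have "\<forall>\<^sub>F K in sequentially. K \<ge> (1::nat) \<and> 4 * (real K + 1) / q ^ K < 1"
    by (rule eventually_conj[rotated])
  then obtain K :: nat where "K \<ge> 1" "4 * (real K + 1) / q ^ K < 1"
    using eventually_sequentially by auto
  moreover have "q ^ K > 0" using q1 by simp
  ultimately show ?thesis by (intro exI[of _ K]) (simp add: pw divide_less_eq)
qed

theorem lemma4:
  fixes m :: nat and w :: real and nk :: "nat \<Rightarrow> nat"
  assumes "m \<ge> 1" and "w > 0"
    and "strict_mono nk"
    and "range nk = {n. n \<ge> 1 \<and> phi (eta_w w n) = m}"
  shows "completely_deterministic_seq nk"
proof -
  have w: "w > 0" by fact
  define P where "P k = (phi k = m)" for k
  have om: "(n \<in> range nk) = P (eta_w w n)" if "n \<ge> 1" for n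
    using assms(4) that P_def by auto
  show ?thesis unfolding completely_deterministic_seq_def completely_deterministic_def
  proof (intro allI impI)
    fix \<epsilon> :: real assume eps: "\<epsilon> > 0"
    obtain K :: nat where K1: "K \<ge> 1" and Kb: "4 * (real K + 1) < 2 powr (\<epsilon> * real K)"
      using exists_K[OF eps] by blast
    define k0 where "k0 = nat \<lceil>real K / w\<rceil> + 1"
    define N where "N = Sw w k0"
    have N1: "N \<ge> 1" using Sw_ge[OF w, of k0] unfolding k0_def N_def by simp
    define A where "A = (\<lambda>j. N + j * K) ` UNIV"
    define S where "S = {1..<N}"
    define word where "word = (\<lambda>(t::nat, b1::bool, b2::bool). map (\<lambda>i. if i < t then b1 else b2) [0..<K])"
    define D where "D = {0..K} \<times> (UNIV::bool set) \<times> (UNIV::bool set)"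
    define C where "C = word ` D"
    have finD: "finite D" unfolding D_def by simp
    have finC: "finite C" unfolding C_def using finD by simp
    have lenC: "\<forall>c\<in>C. length c = K" unfolding C_def word_def by auto
    have c4: "card (UNIV :: (bool \<times> bool) set) = 4"
      using card_cartesian_product[of "UNIV :: bool set" "UNIV :: bool set"]
      by (simp only: UNIV_Times_UNIV card_UNIV_bool)
    have "card C \<le> card D" unfolding C_def using finD by (rule card_image_le)
    also have "card D = (K + 1) * 4" unfolding D_def
      using c4 card_cartesian_product[of "{0..K}" "UNIV :: (bool \<times> bool) set"]
      by (simp only: UNIV_Times_UNIV card_atLeastAtMost) simp
    finally have "real (card C) \<le> 4 * (real K + 1)" by simp
    with Kb have cardC: "real (card C) < 2 powr (\<epsilon> * real K)" by linarith
    have dens: "upper_density S < ereal \<epsilon>" unfolding S_def density_fin using eps by simp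
    have A1: "A \<subseteq> {1..}" unfolding A_def using N1 by auto
    have disj: "\<forall>a\<in>A. \<forall>b\<in>A. a \<noteq> b \<longrightarrow> {a..<a+K} \<inter> {b..<b+K} = {}"
    proof (intro ballI impI)
      fix a b assume "a \<in> A" "b \<in> A" "a \<noteq> b"
      then obtain i j where a: "a = N + i * K" and b: "b = N + j * K" and "i \<noteq> j"
        unfolding A_def by auto
      show "{a..<a+K} \<inter> {b..<b+K} = {}"
      proof (cases "i < j")
        case True
        hence "i * K + K \<le> j * K" using mult_le_mono1[of "Suc i" j K] by simp
        thus ?thesis using a b by auto
      next
        case False
        hence "j * K + K \<le> i * K" using \<open>i \<noteq> j\<close> mult_le_mono1[of "Suc j" i K] by simp
        thus ?thesis using a b by auto
      qed
    qed
    have cover: "{1..} - S \<subseteq> (\<Union>a\<in>A. {a..<a+K})"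
    proof
      fix n assume "n \<in> {1..} - S"
      hence nN: "n \<ge> N" unfolding S_def by auto
      define j where "j = (n - N) div K"
      have "n - N = j * K + (n - N) mod K" unfolding j_def by simp
      moreover have "(n - N) mod K < K" using K1 by simp
      ultimately have "N + j * K \<le> n" "n < N + j * K + K" using nN by linarith+
      thus "n \<in> (\<Union>a\<in>A. {a..<a+K})" unfolding A_def by auto
    qed
    have blocks: "\<forall>a\<in>A. map (\<lambda>n. n \<in> range nk) [a..<a+K] \<in> C"
    proof
      fix a assume "a \<in> A"
      hence aN: "a \<ge> N" unfolding A_def by auto
      hence a1: "a \<ge> 1" using N1 by simp
      define e where "e = eta_w w a"
      have ek0: "k0 \<le> e" unfolding e_def using eta_ge[OF w] aN N_def by simp
      have e1: "Sw w e \<le> a" "a < Sw w (Suc e)" using eta_props[OF w, of a] e_def by auto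
      have "real K \<le> w * (real K / w)" using w by simp
      also have "\<dots> \<le> w * real k0" unfolding k0_def using w by (intro mult_left_mono) linarith+
      also have "\<dots> \<le> w * real (Suc e)" using ek0 w by simp
      also have "\<dots> \<le> real (L_w w (Suc (Suc e)))" by (rule L_grow[OF w]) simp
      finally have LK: "K \<le> L_w w (Suc (Suc e))" by linarith
      define t where "t = min K (Sw w (Suc e) - a)"
      have "map (\<lambda>n. n \<in> range nk) [a..<a+K] = word (t, P e, P (Suc e))"
      proof (rule nth_equalityI)
        show "length (map (\<lambda>n. n \<in> range nk) [a..<a+K]) = length (word (t, P e, P (Suc e)))"
          unfolding word_def by simp
        fix i assume "i < length (map (\<lambda>n. n \<in> range nk) [a..<a+K])"
        hence iK: "i < K" by simp
        have l: "map (\<lambda>n. n \<in> range nk) [a..<a+K] ! i = P (eta_w w (a + i))"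
          using iK om[of "a+i"] a1 by simp
        have r: "word (t, P e, P (Suc e)) ! i = (if i < t then P e else P (Suc e))"
          unfolding word_def using iK by simp
        show "map (\<lambda>n. n \<in> range nk) [a..<a+K] ! i = word (t, P e, P (Suc e)) ! i"
        proof (cases "i < t")
          case True
          hence "eta_w w (a + i) = e" using e1 unfolding t_def by (intro eta_eq[OF w]) auto
          thus ?thesis using l r True by simp
        next
          case False
          have "Sw w (Suc (Suc e)) = Sw w (Suc e) + L_w w (Suc (Suc e))" by (rule Sw_Suc)
          hence "eta_w w (a + i) = Suc e" using e1 False iK LK unfolding t_def
            by (intro eta_eq[OF w]) auto
          thus ?thesis using l r False by simp
        qed
      qed
      moreover have "(t, P e, P (Suc e)) \<in> D" unfolding D_def t_def by simp
      ultimately show "map (\<lambda>n. n \<in> range nk) [a..<a+K] \<in> C" unfolding C_def by blast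
    qed
    show "\<exists>K\<ge>1. \<exists>S C A. S \<subseteq> {1..} \<and> upper_density S < ereal \<epsilon> \<and>
             finite C \<and> (\<forall>c\<in>C. length c = K) \<and>
             real (card C) < 2 powr (\<epsilon> * real K) \<and>
             A \<subseteq> {1..} \<and>
             (\<forall>a\<in>A. \<forall>b\<in>A. a \<noteq> b \<longrightarrow> {a..<a+K} \<inter> {b..<b+K} = {}) \<and>
             {1..} - S \<subseteq> (\<Union>a\<in>A. {a..<a+K}) \<and>
             (\<forall>a\<in>A. map (\<lambda>n. n \<in> range nk) [a..<a+K] \<in> C)"
      apply (rule exI[of _ K], rule conjI[OF K1])
      apply (rule exI[of _ S], rule exI[of _ C], rule exI[of _ A])
      using S_def by (intro conjI dens finC lenC cardC A1 disj cover blocks) auto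
  qed
qed

end
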